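(* Let $G$ be a group and let $\mathrm{Conj}(G)$ be the quandle with underlying set $G$ and operation $x\triangleright y=y^{-1}xy$. Then $\mathrm{Conj}(G)$ is a quasi-trivial quandle if and only if $G$ is a $2$-Engel group, i.e. $x$ commutes with $g^{-1}xg$ for all $x,g\in G$.
   Context: A quandle is a set $X$ with a binary operation $\triangleright$ such that: (i) for all $x,y\in X$ there is a unique $z$ with $y=z\triangleright x$; (ii) $(x\triangleright y)\triangleright z=(x\triangleright z)\triangleright(y\triangleright z)$ for all $x,y,z\in X$; (iii) $x\triangleright x=x$ for all $x\in X$. For $x\in X$ the map $R_x(y)=y\triangleright x$ is a bijection. The inner automorphism group $\mathrm{Inn}(X)$ is the group generated by all $R_x$, and the orbits of $X$ are the orbits of the action of $\mathrm{Inn}(X)$ on $X$. A quandle is quasi-trivial if $x\triangleright y=x$ for all $x,y$ lying in the same orbit. *)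

theory Defs
  imports "HOL-Algebra.Group"
begin

definition quandle :: "'a set \<Rightarrow> ('a \<Rightarrow> 'a \<Rightarrow> 'a) \<Rightarrow> bool" where
  "quandle X qop \<longleftrightarrow>
     (\<forall>x\<in>X. \<forall>y\<in>X. qop x y \<in> X) \<and>
     (\<forall>x\<in>X. \<forall>y\<in>X. \<exists>!z. z \<in> X \<and> y = qop z x) \<and>
     (\<forall>x\<in>X. \<forall>y\<in>X. \<forall>z\<in>X. qop (qop x y) z = qop (qop x z) (qop y z)) \<and>
     (\<forall>x\<in>X. qop x x = x)"

definition rtrans :: "('a \<Rightarrow> 'a \<Rightarrow> 'a) \<Rightarrow> 'a \<Rightarrow> 'a \<Rightarrow> 'a" where
  "rtrans qop x = (\<lambda>y. qop y x)"

text \<open>Elements of the inner automorphism group Inn(X): the group generated by the R_x,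
  i.e. all finite composites of the R_x and their inverses (as maps on X).\<close>
inductive_set inn :: "'a set \<Rightarrow> ('a \<Rightarrow> 'a \<Rightarrow> 'a) \<Rightarrow> ('a \<Rightarrow> 'a) set"
  for X qop where
  inn_id: "(\<lambda>y. y) \<in> inn X qop"
| inn_R: "f \<in> inn X qop \<Longrightarrow> x \<in> X \<Longrightarrow> rtrans qop x \<circ> f \<in> inn X qop"
| inn_Rinv: "f \<in> inn X qop \<Longrightarrow> x \<in> X \<Longrightarrow> inv_into X (rtrans qop x) \<circ> f \<in> inn X qop"

definition quandle_orbit :: "'a set \<Rightarrow> ('a \<Rightarrow> 'a \<Rightarrow> 'a) \<Rightarrow> 'a \<Rightarrow> 'a set" where
  "quandle_orbit X qop x = {f x | f. f \<in> inn X qop}"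

definition quasi_trivial :: "'a set \<Rightarrow> ('a \<Rightarrow> 'a \<Rightarrow> 'a) \<Rightarrow> bool" where
  "quasi_trivial X qop \<longleftrightarrow> quandle X qop \<and>
     (\<forall>x\<in>X. \<forall>y\<in>X. y \<in> quandle_orbit X qop x \<longrightarrow> qop x y = x)"

definition conj_op :: "('a, 'b) monoid_scheme \<Rightarrow> 'a \<Rightarrow> 'a \<Rightarrow> 'a" where
  "conj_op G x y = inv\<^bsub>G\<^esub> y \<otimes>\<^bsub>G\<^esub> x \<otimes>\<^bsub>G\<^esub> y"

definition two_engel :: "('a, 'b) monoid_scheme \<Rightarrow> bool" where
  "two_engel G \<longleftrightarrow> (\<forall>x\<in>carrier G. \<forall>g\<in>carrier G.
     x \<otimes>\<^bsub>G\<^esub> (inv\<^bsub>G\<^esub> g \<otimes>\<^bsub>G\<^esub> x \<otimes>\<^bsub>G\<^esub> g) = (inv\<^bsub>G\<^esub> g \<otimes>\<^bsub>G\<^esub> x \<otimes>\<^bsub>G\<^esub> g) \<otimes>\<^bsub>G\<^esub> x)"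

end

theory Submission
  imports Defs
begin

context group begin

lemma cancel_aux[simp]:
  "z \<in> carrier G \<Longrightarrow> a \<in> carrier G \<Longrightarrow> z \<otimes> (inv z \<otimes> a) = a"
  "z \<in> carrier G \<Longrightarrow> a \<in> carrier G \<Longrightarrow> inv z \<otimes> (z \<otimes> a) = a"
  by (simp_all flip: m_assoc)

lemma i_aux: "y \<in> carrier G \<Longrightarrow> z \<in> carrier G \<Longrightarrow> inv (inv z \<otimes> (y \<otimes> z)) = inv z \<otimes> (inv y \<otimes> z)"
  by (simp add: inv_mult_group m_assoc)

lemma sd_aux: "x \<in> carrier G \<Longrightarrow> y \<in> carrier G \<Longrightarrow> z \<in> carrier G \<Longrightarrow> conj_op G (conj_op G x y) z = conj_op G (conj_op G x z) (conj_op G y z)"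
  by (simp add: conj_op_def m_assoc i_aux)

lemma conj_quandle:
  shows "quandle (carrier G) (conj_op G)"
proof -
  have cl: "\<forall>x\<in>carrier G. \<forall>y\<in>carrier G. conj_op G x y \<in> carrier G"
    by (simp add: conj_op_def)
  have un: "\<forall>x\<in>carrier G. \<forall>y\<in>carrier G. \<exists>!z. z \<in> carrier G \<and> y = conj_op G z x"
  proof (intro ballI)
    fix x y assume x: "x \<in> carrier G" and y: "y \<in> carrier G"
    show "\<exists>!z. z \<in> carrier G \<and> y = conj_op G z x"
    proof (rule ex1I[of _ "x \<otimes> y \<otimes> inv x"])
      show "x \<otimes> y \<otimes> inv x \<in> carrier G \<and> y = conj_op G (x \<otimes> y \<otimes> inv x) x"
        using x y by (simp add: conj_op_def m_assoc inv_solve_left)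
    next
      fix z assume z: "z \<in> carrier G \<and> y = conj_op G z x"
      hence "x \<otimes> y \<otimes> inv x = x \<otimes> (inv x \<otimes> z \<otimes> x) \<otimes> inv x" by (simp add: conj_op_def)
      also have "\<dots> = z" using x z by (simp add: m_assoc r_inv_ex)
      finally show "z = x \<otimes> y \<otimes> inv x" by simp
    qed
  qed
  have sd: "\<forall>x\<in>carrier G. \<forall>y\<in>carrier G. \<forall>z\<in>carrier G.
     conj_op G (conj_op G x y) z = conj_op G (conj_op G x z) (conj_op G y z)"
    using sd_aux by blast
  have id: "\<forall>x\<in>carrier G. conj_op G x x = x"
    by (simp add: conj_op_def)
  show ?thesis unfolding quandle_def using cl un sd id by blast
qed

lemma inn_conj:
  assumes f: "f \<in> inn (carrier G) (conj_op G)"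
  shows "\<forall>x\<in>carrier G. \<exists>h\<in>carrier G. f x = inv\<^bsub>G\<^esub> h \<otimes>\<^bsub>G\<^esub> x \<otimes>\<^bsub>G\<^esub> h"
  using f
proof induction
  case inn_id
  show ?case by (metis one_closed inv_one l_one r_one)
next
  case (inn_R f g)
  show ?case
  proof
    fix x assume x: "x \<in> carrier G"
    then obtain h where h: "h \<in> carrier G" "f x = inv h \<otimes> x \<otimes> h" using inn_R by blast
    have "(rtrans (conj_op G) g \<circ> f) x = inv (h \<otimes> g) \<otimes> x \<otimes> (h \<otimes> g)"
      using h x inn_R by (simp add: rtrans_def conj_op_def inv_mult_group m_assoc)
    thus "\<exists>h\<in>carrier G. (rtrans (conj_op G) g \<circ> f) x = inv h \<otimes> x \<otimes> h"
      using h inn_R by blast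
  qed
next
  case (inn_Rinv f g)
  show ?case
  proof
    fix x assume x: "x \<in> carrier G"
    then obtain h where h: "h \<in> carrier G" "f x = inv h \<otimes> x \<otimes> h" using inn_Rinv by blast
    let ?w = "f x"
    have w: "?w \<in> carrier G" using h x by simp
    have inj: "inj_on (rtrans (conj_op G) g) (carrier G)"
      unfolding inj_on_def rtrans_def conj_op_def
    proof (intro ballI impI)
      fix a b assume a: "a \<in> carrier G" and b: "b \<in> carrier G"
        and e: "inv g \<otimes> a \<otimes> g = inv g \<otimes> b \<otimes> g"
      have "g \<otimes> (inv g \<otimes> a \<otimes> g) \<otimes> inv g = g \<otimes> (inv g \<otimes> b \<otimes> g) \<otimes> inv g"
        by (simp only: e)
      thus "a = b" using a b inn_Rinv by (simp add: m_assoc)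
    qed
    have "rtrans (conj_op G) g (g \<otimes> ?w \<otimes> inv g) = ?w"
      using w inn_Rinv by (simp add: rtrans_def conj_op_def m_assoc)
    hence "inv_into (carrier G) (rtrans (conj_op G) g) ?w = g \<otimes> ?w \<otimes> inv g"
      using inj w inn_Rinv by (intro inv_into_f_eq) auto
    also have "\<dots> = inv (h \<otimes> inv g) \<otimes> x \<otimes> (h \<otimes> inv g)"
      using h x inn_Rinv by (simp add: inv_mult_group m_assoc)
    finally show "\<exists>h\<in>carrier G. (inv_into (carrier G) (rtrans (conj_op G) g) \<circ> f) x = inv h \<otimes> x \<otimes> h"
      using h inn_Rinv by auto
  qed
qed

lemma main_aux:
  shows "quasi_trivial (carrier G) (conj_op G) \<longleftrightarrow> two_engel G"
proof -
  have comm: "conj_op G x y = x \<longleftrightarrow> x \<otimes> y = y \<otimes> x" if "x \<in> carrier G" "y \<in> carrier G" for x y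
  proof
    assume "conj_op G x y = x"
    hence "y \<otimes> (inv y \<otimes> x \<otimes> y) = y \<otimes> x" by (simp add: conj_op_def)
    thus "x \<otimes> y = y \<otimes> x" using that by (simp add: m_assoc)
  next
    assume "x \<otimes> y = y \<otimes> x"
    thus "conj_op G x y = x" using that by (simp add: conj_op_def m_assoc)
  qed
  show ?thesis
  proof
    assume q: "quasi_trivial (carrier G) (conj_op G)"
    show "two_engel G" unfolding two_engel_def
    proof (intro ballI)
      fix x g assume x: "x \<in> carrier G" and g: "g \<in> carrier G"
      have "rtrans (conj_op G) g \<circ> (\<lambda>y. y) \<in> inn (carrier G) (conj_op G)"
        using g by (intro inn.inn_R inn.inn_id)
      hence "inv g \<otimes> x \<otimes> g \<in> quandle_orbit (carrier G) (conj_op G) x"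
        unfolding quandle_orbit_def
      proof (intro CollectI exI conjI)
        show "inv g \<otimes> x \<otimes> g = (rtrans (conj_op G) g \<circ> (\<lambda>y. y)) x"
          by (simp add: rtrans_def conj_op_def)
      qed
      hence "conj_op G x (inv g \<otimes> x \<otimes> g) = x" using q x g by (simp add: quasi_trivial_def)
      thus "x \<otimes> (inv g \<otimes> x \<otimes> g) = inv g \<otimes> x \<otimes> g \<otimes> x" using comm x g by simp
    qed
  next
    assume e: "two_engel G"
    show "quasi_trivial (carrier G) (conj_op G)" unfolding quasi_trivial_def
    proof (intro conjI ballI impI)
      show "quandle (carrier G) (conj_op G)" by (rule conj_quandle)
      fix x y assume x: "x \<in> carrier G" and y: "y \<in> carrier G"
        and o: "y \<in> quandle_orbit (carrier G) (conj_op G) x"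
      then obtain f where f: "f \<in> inn (carrier G) (conj_op G)" "y = f x"
        unfolding quandle_orbit_def by blast
      then obtain h where h: "h \<in> carrier G" "y = inv h \<otimes> x \<otimes> h"
        using inn_conj[OF f(1)] x by blast
      hence "x \<otimes> y = y \<otimes> x" using e x unfolding two_engel_def by blast
      thus "conj_op G x y = x" using comm x y by simp
    qed
  qed
qed

end

theorem mainTheorem8:
  fixes G :: "('a, 'b) monoid_scheme"
  assumes "group G"
  shows "quasi_trivial (carrier G) (conj_op G) \<longleftrightarrow> two_engel G"
  by (rule group.main_aux[OF assms])

end
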